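(* Let $H=(S,A,\delta,\mathcal{O})$ be a POMDP with initial state $\ell_0$, $\mathcal{G}$ the game with probabilistic uncertainty constructed from it, and $\alpha_H$ an observation-based Player-1 strategy in $H$. Define the Player-1 strategy $\alpha_G$ in $\mathcal{G}$ by $\alpha_G(\rho_G)=\alpha_H(h^{-1}(\rho_G))$. Then for all finite prefixes $\rho_H$ of $H$, $\Pr^{\alpha_H}_{\ell_0}(\mathsf{Cone}(\rho_H))=\Pr^{\alpha_G}_{\ell_0}(\mathsf{Cone}(h(\rho_H)))$, where the left side is the measure in $H$ and the right side the measure in $\mathcal{G}$.
   Context: A POMDP is $H=(S,A,\delta,\mathcal{O})$ with $S$ a finite state set, $A$ a finite action set, $\delta:S\times A\to\mathcal{D}(S)$ ($\mathcal{D}$ = probability distributions), and $\mathcal{O}$ a partition of $S$; $\mathsf{obs}(s)$ is the block containing $s$, and $\mathsf{obs}(s_0a_0s_1\ldots s_n)=\mathsf{obs}(s_0)a_0\ldots\mathsf{obs}(s_n)$. An observation-based Player-1 strategy maps prefixes $s_0a_0\ldots s_n$ to $\mathcal{D}(A)$ and agrees on prefixes with equal observation sequences. The measure in $H$ from $\ell_0$: $\Pr(\mathsf{Cone}(\ell_0))=1$ and $\Pr(\mathsf{Cone}(\rho as'))=\Pr(\mathsf{Cone}(\rho))\alpha(\rho)(a)\delta(s,a)(s')$ where $s$ is the last state of $\rho$ ($\mathsf{Cone}(\rho)$ = plays with prefix $\rho$). The game $\mathcal{G}=(L,\Sigma_I,\Sigma_O,\Delta,\mathsf{un})$ constructed from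 $H$ has $L=S$, $\Sigma_I=A$, $\Sigma_O=\{\bot\}$, $\Delta(\ell,a,\bot)=\delta(\ell,a)$, and $\mathsf{un}(\ell)(\ell')=1/|\mathsf{obs}(\ell)|$ if $\mathsf{obs}(\ell')=\mathsf{obs}(\ell)$, else $0$. The map $h$ sends $s_0a_0s_1a_1\ldots s_n$ to $s_0a_0\bot s_1a_1\bot\ldots s_n$ (a bijection). For sequences $\rho=\ell_0\sigma^i_0\sigma^o_0\ldots\ell_n$, $\rho'=\ell'_0\tilde\sigma^i_0\tilde\sigma^o_0\ldots\ell'_m$ of $\mathcal{G}$, $\mathsf{ObsSeq}(\rho)(\rho')=\prod_{j=0}^n\mathsf{un}(\ell_j)(\ell'_j)$ if $m=n$ and all letters coincide, else $0$; $\mathsf{ActMt}(\rho)$ is the set of sequences with the same length and letters as $\rho$. Since Player 2 has only one strategy (always $\bot$), the measure in $\mathcal{G}$ from $\ell_0$ is: $\Pr^{\alpha}_{\ell_0}(\mathsf{Cone}(\ell_0))=1$ and, for $\rho$ with last location $\ell_n$, $\Pr(\mathsf{Cone}(\rho a\bot\ell_{n+1}))=\Pr(\mathsf{Cone}(\rho))\sum_{\rho'\in\mathsf{ActMt}(\rho)}\mathsf{ObsSeq}(\rho)(\rho')\alpha(\rho')(a)\Delta(\ell_n,a,\bot)(\ell_{n+1})$. *)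

theory Defs
  imports "HOL-Probability.Probability" "HOL-Library.Disjoint_Sets"
begin

text \<open>A finite prefix s0 a0 s1 ... sn is represented as (s0, [(a0,s1),...,(a_{n-1},sn)]).\<close>

type_synonym ('s,'a) hpath = "'s \<times> ('a \<times> 's) list"

definition obs :: "'s set set \<Rightarrow> 's \<Rightarrow> 's set" where
  "obs Obs s = (THE B. B \<in> Obs \<and> s \<in> B)"

definition obs_seq :: "'s set set \<Rightarrow> ('s,'a) hpath \<Rightarrow> 's set \<times> ('a \<times> 's set) list" where
  "obs_seq Obs \<rho> = (obs Obs (fst \<rho>), map (\<lambda>(a,s). (a, obs Obs s)) (snd \<rho>))"

definition observation_based :: "'s set set \<Rightarrow> (('s,'a) hpath \<Rightarrow> 'a pmf) \<Rightarrow> bool" where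
  "observation_based Obs \<alpha> \<longleftrightarrow> (\<forall>\<rho> \<rho>'. obs_seq Obs \<rho> = obs_seq Obs \<rho>' \<longrightarrow> \<alpha> \<rho> = \<alpha> \<rho>')"

definition last_state :: "'s \<times> ('b \<times> 's) list \<Rightarrow> 's" where
  "last_state \<rho> = last (fst \<rho> # map snd (snd \<rho>))"

text \<open>Cone probability in H; the argument list is the reversed list of steps.\<close>
primrec pomdp_prob_rev :: "('s \<Rightarrow> 'a \<Rightarrow> 's pmf) \<Rightarrow> (('s,'a) hpath \<Rightarrow> 'a pmf) \<Rightarrow> 's
    \<Rightarrow> 's \<Rightarrow> ('a \<times> 's) list \<Rightarrow> real" where
  "pomdp_prob_rev \<delta> \<alpha> l0 s0 [] = (if s0 = l0 then 1 else 0)"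
| "pomdp_prob_rev \<delta> \<alpha> l0 s0 (x # r) =
     pomdp_prob_rev \<delta> \<alpha> l0 s0 r
     * pmf (\<alpha> (s0, rev r)) (fst x)
     * pmf (\<delta> (last_state (s0, rev r)) (fst x)) (snd x)"

definition pomdp_prob :: "('s \<Rightarrow> 'a \<Rightarrow> 's pmf) \<Rightarrow> (('s,'a) hpath \<Rightarrow> 'a pmf) \<Rightarrow> 's
    \<Rightarrow> ('s,'a) hpath \<Rightarrow> real" where
  "pomdp_prob \<delta> \<alpha> l0 \<rho> = pomdp_prob_rev \<delta> \<alpha> l0 (fst \<rho>) (rev (snd \<rho>))"

section \<open>Games with probabilistic uncertainty, output alphabet {bot} (= unit)\<close>

text \<open>A sequence l0 si0 so0 l1 ... ln is represented as (l0, [(si0,so0,l1),...]).\<close>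
type_synonym ('l,'i) gpath = "'l \<times> ('i \<times> unit \<times> 'l) list"

definition letters :: "('l,'i) gpath \<Rightarrow> ('i \<times> unit) list" where
  "letters \<rho> = map (\<lambda>(a,u,l). (a,u)) (snd \<rho>)"

definition locs :: "('l,'i) gpath \<Rightarrow> 'l list" where
  "locs \<rho> = fst \<rho> # map (\<lambda>(a,u,l). l) (snd \<rho>)"

definition ActMt :: "('l,'i) gpath \<Rightarrow> ('l,'i) gpath set" where
  "ActMt \<rho> = {\<rho>'. length (snd \<rho>') = length (snd \<rho>) \<and> letters \<rho>' = letters \<rho>}"

definition ObsSeq :: "('l \<Rightarrow> 'l \<Rightarrow> real) \<Rightarrow> ('l,'i) gpath \<Rightarrow> ('l,'i) gpath \<Rightarrow> real" where
  "ObsSeq un \<rho> \<rho>' =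
     (if length (snd \<rho>') = length (snd \<rho>) \<and> letters \<rho>' = letters \<rho>
      then (\<Prod>j\<le>length (snd \<rho>). un (locs \<rho> ! j) (locs \<rho>' ! j)) else 0)"

primrec game_prob_rev :: "('l \<Rightarrow> 'i \<Rightarrow> unit \<Rightarrow> 'l pmf) \<Rightarrow> ('l \<Rightarrow> 'l \<Rightarrow> real)
    \<Rightarrow> (('l,'i) gpath \<Rightarrow> 'i pmf) \<Rightarrow> 'l \<Rightarrow> 'l \<Rightarrow> ('i \<times> unit \<times> 'l) list \<Rightarrow> real" where
  "game_prob_rev \<Delta> un \<alpha> l0 m0 [] = (if m0 = l0 then 1 else 0)"
| "game_prob_rev \<Delta> un \<alpha> l0 m0 (x # r) =
     (case x of (a, u, l') \<Rightarrow>
       game_prob_rev \<Delta> un \<alpha> l0 m0 r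
       * (\<Sum>\<rho>'\<in>ActMt (m0, rev r). ObsSeq un (m0, rev r) \<rho>' * pmf (\<alpha> \<rho>') a
            * pmf (\<Delta> (last (locs (m0, rev r))) a u) l'))"

text \<open>Pr^alpha_{l0}(Cone rho) in the game (Player 2 has a unique strategy: always bot).\<close>
definition game_prob :: "('l \<Rightarrow> 'i \<Rightarrow> unit \<Rightarrow> 'l pmf) \<Rightarrow> ('l \<Rightarrow> 'l \<Rightarrow> real)
    \<Rightarrow> (('l,'i) gpath \<Rightarrow> 'i pmf) \<Rightarrow> 'l \<Rightarrow> ('l,'i) gpath \<Rightarrow> real" where
  "game_prob \<Delta> un \<alpha> l0 \<rho> = game_prob_rev \<Delta> un \<alpha> l0 (fst \<rho>) (rev (snd \<rho>))"

definition pomdp_game_Delta :: "('s \<Rightarrow> 'a \<Rightarrow> 's pmf) \<Rightarrow> 's \<Rightarrow> 'a \<Rightarrow> unit \<Rightarrow> 's pmf" where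
  "pomdp_game_Delta \<delta> l a u = \<delta> l a"

definition pomdp_game_un :: "'s set set \<Rightarrow> 's \<Rightarrow> 's \<Rightarrow> real" where
  "pomdp_game_un Obs l l' = (if obs Obs l' = obs Obs l then 1 / real (card (obs Obs l)) else 0)"

definition h :: "('s,'a) hpath \<Rightarrow> ('s,'a) gpath" where
  "h \<rho> = (fst \<rho>, map (\<lambda>(a,s). (a, (), s)) (snd \<rho>))"

end

theory Submission
  imports Defs
begin

lemma obs_props:
  assumes P: "partition_on UNIV Obs"
  shows "obs Obs s \<in> Obs \<and> s \<in> obs Obs s"
proof -
  obtain B where B: "B \<in> Obs" "s \<in> B" using partition_onD1[OF P] by blast
  have u: "\<And>C. C \<in> Obs \<and> s \<in> C \<Longrightarrow> C = B"
    using disjointD[OF partition_onD2[OF P]] B by blast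
  have "obs Obs s = B" unfolding obs_def
    by (rule the_equality) (use B u in blast)+
  thus ?thesis using B by simp
qed

lemma obs_eq_iff:
  assumes P: "partition_on UNIV Obs"
  shows "obs Obs l = obs Obs x \<longleftrightarrow> l \<in> obs Obs x"
proof
  assume "obs Obs l = obs Obs x" thus "l \<in> obs Obs x" using obs_props[OF P, of l] by simp
next
  assume l: "l \<in> obs Obs x"
  have "obs Obs l \<in> Obs" "l \<in> obs Obs l" "obs Obs x \<in> Obs" using obs_props[OF P] by auto
  thus "obs Obs l = obs Obs x" using disjointD[OF partition_onD2[OF P]] l by blast
qed

lemma un_sum:
  assumes P: "partition_on UNIV Obs"
  shows "(\<Sum>l\<in>(UNIV::('s::finite) set). pomdp_game_un Obs x l) = 1"
proof -
  have "(\<Sum>l\<in>(UNIV::'s set). pomdp_game_un Obs x l) = (\<Sum>l\<in>obs Obs x. 1 / real (card (obs Obs x)))"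
    unfolding pomdp_game_un_def using obs_eq_iff[OF P]
    by (simp add: sum.If_cases Int_def)
  also have "\<dots> = 1" using obs_props[OF P, of x] by (auto simp: card_gt_0_iff)
  finally show ?thesis .
qed

lemma lists_sum:
  fixes un :: "'l::finite \<Rightarrow> 'l \<Rightarrow> real"
  assumes "\<And>x. (\<Sum>l\<in>UNIV. un x l) = 1"
  shows "(\<Sum>L'\<in>{L'. length L' = length L}. \<Prod>j<length L. un (L!j) (L'!j)) = 1"
proof (induction L)
  case Nil thus ?case by simp
next
  case (Cons x L)
  define S where "S = {L'::'l list. length L' = length L}"
  have e: "{L'. length L' = length (x#L)} = (\<lambda>(y,ys). y#ys) ` (UNIV \<times> S)"
    unfolding S_def by (auto simp: length_Suc_conv)
  have i: "inj_on (\<lambda>(y,ys). y#ys) (UNIV \<times> S)" by (auto simp: inj_on_def)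
  have q: "\<And>y ys. (\<Prod>j<length (x#L). un ((x#L)!j) ((y#ys)!j)) = un x y * (\<Prod>j<length L. un (L!j) (ys!j))"
    by (simp only: length_Cons prod.lessThan_Suc_shift nth_Cons_0 nth_Cons_Suc)
  have "(\<Sum>L'\<in>{L'. length L' = length (x#L)}. \<Prod>j<length (x#L). un ((x#L)!j) (L'!j))
      = (\<Sum>(y,ys)\<in>UNIV \<times> S. un x y * (\<Prod>j<length L. un (L!j) (ys!j)))"
    unfolding e sum.reindex[OF i] by (simp only: comp_def case_prod_unfold q)
  also have "\<dots> = (\<Sum>y\<in>UNIV. \<Sum>ys\<in>S. un x y * (\<Prod>j<length L. un (L!j) (ys!j)))"
    by (rule sum.cartesian_product[symmetric])
  also have "\<dots> = (\<Sum>y\<in>UNIV. un x y * (\<Sum>ys\<in>S. (\<Prod>j<length L. un (L!j) (ys!j))))"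
    by (simp only: sum_distrib_left)
  also have "\<dots> = 1" using Cons assms unfolding S_def by simp
  finally show ?case .
qed


definition zipg :: "('i \<times> unit) list \<Rightarrow> 'l list \<Rightarrow> ('l,'i) gpath" where
  "zipg w L = (hd L, map (\<lambda>((a,u),l). (a,u,l)) (zip w (tl L)))"

lemma unzip_g: "map (\<lambda>((a,u),l). (a,u,l)) (zip (map (\<lambda>(a,u,l). (a,u)) ys) (map (\<lambda>(a,u,l). l) ys)) = ys"
  by (induction ys) auto

lemma ActMt_image:
  fixes \<rho> :: "('l,'i) gpath"
  shows "ActMt \<rho> = zipg (letters \<rho>) ` {L. length L = Suc (length (snd \<rho>))}"
proof (intro set_eqI iffI)
  fix \<rho>' assume "\<rho>' \<in> ActMt \<rho>"
  hence a: "length (snd \<rho>') = length (snd \<rho>)" "letters \<rho>' = letters \<rho>" by (auto simp: ActMt_def)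
  have "\<rho>' = zipg (letters \<rho>') (locs \<rho>')"
    unfolding zipg_def locs_def letters_def list.sel(1,3) unzip_g by simp
  hence "\<rho>' = zipg (letters \<rho>) (locs \<rho>')" using a(2) by simp
  moreover have "length (locs \<rho>') = Suc (length (snd \<rho>))" using a by (simp add: locs_def)
  ultimately show "\<rho>' \<in> zipg (letters \<rho>) ` {L. length L = Suc (length (snd \<rho>))}" by blast
next
  fix \<rho>' :: "('l,'i) gpath" assume "\<rho>' \<in> zipg (letters \<rho>) ` {L. length L = Suc (length (snd \<rho>))}"
  then obtain L where L: "length L = Suc (length (snd \<rho>))" "\<rho>' = zipg (letters \<rho>) L" by blast
  have ll: "length (letters \<rho>) = length (tl L)" using L by (simp add: letters_def)
  have "letters \<rho>' = map fst (zip (letters \<rho>) (tl L))"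
    unfolding L(2) zipg_def letters_def by (simp add: case_prod_beta prod_eq_iff)
  also have "\<dots> = letters \<rho>" using ll by simp
  finally show "\<rho>' \<in> ActMt \<rho>" using L ll by (simp add: ActMt_def zipg_def letters_def)
qed

lemma locs_zipg:
  assumes "length L = Suc (length w)"
  shows "locs (zipg w L) = L"
proof -
  have "locs (zipg w L) = hd L # map snd (zip w (tl L))"
    unfolding zipg_def locs_def by (simp add: case_prod_beta)
  also have "\<dots> = L" using assms by (cases L) auto
  finally show ?thesis .
qed

lemma sum_ObsSeq:
  fixes un :: "'l::finite \<Rightarrow> 'l \<Rightarrow> real" and \<rho> :: "('l,'i) gpath"
  assumes "\<And>x. (\<Sum>l\<in>UNIV. un x l) = 1"
  shows "(\<Sum>\<rho>'\<in>ActMt \<rho>. ObsSeq un \<rho> \<rho>') = 1"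
proof -
  define n where "n = length (snd \<rho>)"
  define LS where "LS = {L::'l list. length L = Suc n}"
  have lw: "length (letters \<rho>) = n" by (simp add: letters_def n_def)
  have inj: "inj_on (zipg (letters \<rho>)) LS"
    by (rule inj_on_inverseI[where g = locs]) (simp add: LS_def locs_zipg lw)
  have "(\<Sum>\<rho>'\<in>ActMt \<rho>. ObsSeq un \<rho> \<rho>') = (\<Sum>L\<in>LS. ObsSeq un \<rho> (zipg (letters \<rho>) L))"
    unfolding ActMt_image n_def[symmetric] LS_def[symmetric] sum.reindex[OF inj] by simp
  also have "\<dots> = (\<Sum>L\<in>LS. \<Prod>j<length (locs \<rho>). un (locs \<rho> ! j) (L ! j))"
  proof (rule sum.cong[OF refl])
    fix L assume L: "L \<in> LS"
    have "zipg (letters \<rho>) L \<in> ActMt \<rho>" unfolding ActMt_image n_def[symmetric] LS_def[symmetric]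
      using L by blast
    hence "ObsSeq un \<rho> (zipg (letters \<rho>) L) = (\<Prod>j\<le>n. un (locs \<rho> ! j) (locs (zipg (letters \<rho>) L) ! j))"
      by (simp add: ObsSeq_def ActMt_def n_def)
    also have "\<dots> = (\<Prod>j<length (locs \<rho>). un (locs \<rho> ! j) (L ! j))"
    proof -
      have "locs (zipg (letters \<rho>) L) = L" using L lw by (simp add: locs_zipg LS_def)
      moreover have "length (locs \<rho>) = Suc n" by (simp add: locs_def n_def)
      ultimately show ?thesis by (simp add: lessThan_Suc_atMost)
    qed
    finally show "ObsSeq un \<rho> (zipg (letters \<rho>) L) = (\<Prod>j<length (locs \<rho>). un (locs \<rho> ! j) (L ! j))" .
  qed
  also have "LS = {L. length L = length (locs \<rho>)}" by (simp add: LS_def locs_def n_def)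
  also have "(\<Sum>L\<in>{L. length L = length (locs \<rho>)}. \<Prod>j<length (locs \<rho>). un (locs \<rho> ! j) (L ! j)) = 1"
    by (rule lists_sum[OF assms])
  finally show ?thesis .
qed


definition hinv :: "('s,'a) gpath \<Rightarrow> ('s,'a) hpath" where
  "hinv \<rho> = (fst \<rho>, map (\<lambda>(a,u,l). (a,l)) (snd \<rho>))"

lemma hinv_h: "hinv (h x) = x"
  by (cases x) (auto simp: hinv_def h_def case_prod_beta intro!: map_idI)

lemma h_hinv: "h (hinv x) = x"
  by (cases x) (auto simp: hinv_def h_def case_prod_beta prod_eq_iff intro!: map_idI)

lemma inv_h: "inv h = hinv"
proof
  fix x
  have "inj h" by (rule inj_on_inverseI[where g = hinv]) (simp add: hinv_h)
  thus "inv h x = hinv x" by (rule inv_f_eq) (simp add: h_hinv)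
qed

lemma obs_seq_eq:
  fixes \<rho> \<rho>' :: "('s::finite,'a) gpath"
  assumes "\<rho>' \<in> ActMt \<rho>" and nz: "ObsSeq (pomdp_game_un Obs) \<rho> \<rho>' \<noteq> 0"
  shows "obs_seq Obs (hinv \<rho>') = obs_seq Obs (hinv \<rho>)"
proof -
  have A: "length (snd \<rho>') = length (snd \<rho>)" "letters \<rho>' = letters \<rho>"
    using assms(1) by (auto simp: ActMt_def)
  have "(\<Prod>j\<le>length (snd \<rho>). pomdp_game_un Obs (locs \<rho> ! j) (locs \<rho>' ! j)) \<noteq> 0"
    using nz A by (simp add: ObsSeq_def)
  hence "\<forall>j\<le>length (snd \<rho>). pomdp_game_un Obs (locs \<rho> ! j) (locs \<rho>' ! j) \<noteq> 0"
    by (simp add: prod_zero_iff)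
  hence O: "\<And>j. j \<le> length (snd \<rho>) \<Longrightarrow> obs Obs (locs \<rho>' ! j) = obs Obs (locs \<rho> ! j)"
    unfolding pomdp_game_un_def by (metis (full_types))
  have f: "obs Obs (fst \<rho>') = obs Obs (fst \<rho>)" using O[of 0] by (simp add: locs_def)
  have s: "map (\<lambda>(a,s). (a, obs Obs s)) (map (\<lambda>(a,u,l). (a,l)) (snd \<rho>'))
         = map (\<lambda>(a,s). (a, obs Obs s)) (map (\<lambda>(a,u,l). (a,l)) (snd \<rho>))"
  proof (rule nth_equalityI)
    show "length (map (\<lambda>(a,s). (a, obs Obs s)) (map (\<lambda>(a,u,l). (a,l)) (snd \<rho>')))
        = length (map (\<lambda>(a,s). (a, obs Obs s)) (map (\<lambda>(a,u,l). (a,l)) (snd \<rho>)))" using A by simp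
  next
    fix i assume "i < length (map (\<lambda>(a,s). (a, obs Obs s)) (map (\<lambda>(a,u,l). (a,l)) (snd \<rho>')))"
    hence i: "i < length (snd \<rho>)" "i < length (snd \<rho>')" using A by auto
    have l: "letters \<rho>' ! i = letters \<rho> ! i" using A by simp
    have o: "obs Obs (locs \<rho>' ! Suc i) = obs Obs (locs \<rho> ! Suc i)" using O[of "Suc i"] i by simp
    obtain a u l where e1: "snd \<rho> ! i = (a,u,l)" by (metis prod_cases3)
    obtain a' u' l' where e2: "snd \<rho>' ! i = (a',u',l')" by (metis prod_cases3)
    have "a' = a" using l i e1 e2 by (simp add: letters_def)
    moreover have "obs Obs l' = obs Obs l" using o i e1 e2 by (simp add: locs_def)
    ultimately show "map (\<lambda>(a,s). (a, obs Obs s)) (map (\<lambda>(a,u,l). (a,l)) (snd \<rho>')) ! i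
        = map (\<lambda>(a,s). (a, obs Obs s)) (map (\<lambda>(a,u,l). (a,l)) (snd \<rho>)) ! i"
      using i e1 e2 by simp
  qed
  show ?thesis using f s by (simp add: obs_seq_def hinv_def)
qed

lemma key_sum:
  fixes \<alpha>H :: "('s::finite,'a) hpath \<Rightarrow> 'a pmf"
  assumes P: "partition_on UNIV Obs" and ob: "observation_based Obs \<alpha>H"
  shows "(\<Sum>\<rho>'\<in>ActMt (h x). ObsSeq (pomdp_game_un Obs) (h x) \<rho>' * pmf (\<alpha>H (hinv \<rho>')) a * c)
       = pmf (\<alpha>H x) a * c"
proof -
  have "(\<Sum>\<rho>'\<in>ActMt (h x). ObsSeq (pomdp_game_un Obs) (h x) \<rho>' * pmf (\<alpha>H (hinv \<rho>')) a * c)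
      = (\<Sum>\<rho>'\<in>ActMt (h x). ObsSeq (pomdp_game_un Obs) (h x) \<rho>' * (pmf (\<alpha>H x) a * c))"
  proof (rule sum.cong[OF refl])
    fix \<rho>' assume r: "\<rho>' \<in> ActMt (h x)"
    show "ObsSeq (pomdp_game_un Obs) (h x) \<rho>' * pmf (\<alpha>H (hinv \<rho>')) a * c
        = ObsSeq (pomdp_game_un Obs) (h x) \<rho>' * (pmf (\<alpha>H x) a * c)"
    proof (cases "ObsSeq (pomdp_game_un Obs) (h x) \<rho>' = 0")
      case False
      hence "obs_seq Obs (hinv \<rho>') = obs_seq Obs x" using obs_seq_eq[OF r False] by (simp add: hinv_h)
      hence "\<alpha>H (hinv \<rho>') = \<alpha>H x" using ob unfolding observation_based_def by blast
      thus ?thesis by simp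
    qed simp
  qed
  also have "\<dots> = pmf (\<alpha>H x) a * c * (\<Sum>\<rho>'\<in>ActMt (h x). ObsSeq (pomdp_game_un Obs) (h x) \<rho>')"
    by (simp add: sum_distrib_left sum_distrib_right mult.commute)
  also have "\<dots> = pmf (\<alpha>H x) a * c" 
  proof -
    have "(\<Sum>\<rho>'\<in>ActMt (h x). ObsSeq (pomdp_game_un Obs) (h x) \<rho>') = 1"
      by (rule sum_ObsSeq) (rule un_sum[OF P])
    thus ?thesis by simp
  qed
  finally show ?thesis .
qed

lemma main_rev:
  fixes \<alpha>H :: "('s::finite,'a) hpath \<Rightarrow> 'a pmf"
  assumes P: "partition_on UNIV Obs" and ob: "observation_based Obs \<alpha>H"
  shows "pomdp_prob_rev \<delta> \<alpha>H l0 s0 r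
       = game_prob_rev (pomdp_game_Delta \<delta>) (pomdp_game_un Obs) (\<lambda>\<rho>G. \<alpha>H (inv h \<rho>G)) l0 s0
           (map (\<lambda>(a,s). (a,(),s)) r)"
proof (induction r)
  case Nil thus ?case by simp
next
  case (Cons x r)
  obtain a s where x: "x = (a,s)" by (cases x)
  have hh: "(s0, rev (map (\<lambda>(a,s). (a,(),s)) r)) = h (s0, rev r)" by (simp add: h_def rev_map)
  have ll: "last (locs (h (s0, rev r))) = last_state (s0, rev r)"
    by (simp add: locs_def h_def last_state_def case_prod_beta comp_def)
  show ?case
    using key_sum[OF P ob, of "(s0, rev r)" a "pmf (\<delta> (last_state (s0, rev r)) a) s"]
    by (simp add: x Cons.IH hh ll inv_h pomdp_game_Delta_def)
qed

theorem lemma5: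
  fixes Obs :: "('s::finite) set set"
    and \<delta> :: "'s \<Rightarrow> ('a::finite) \<Rightarrow> 's pmf"
    and \<alpha>H :: "('s,'a) hpath \<Rightarrow> 'a pmf"
    and l0 :: 's
    and \<rho>H :: "('s,'a) hpath"
  assumes "partition_on UNIV Obs"
    and "observation_based Obs \<alpha>H"
  shows "pomdp_prob \<delta> \<alpha>H l0 \<rho>H
       = game_prob (pomdp_game_Delta \<delta>) (pomdp_game_un Obs) (\<lambda>\<rho>G. \<alpha>H (inv h \<rho>G)) l0 (h \<rho>H)"
  using main_rev[OF assms, of \<delta> l0 "fst \<rho>H" "rev (snd \<rho>H)"]
  by (simp add: pomdp_prob_def game_prob_def h_def rev_map)

end
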